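(* Consider a binary node classification problem on a graph in which every node has exactly $d$ neighbours (self-loops having been added), node labels lie in $\{0,1\}$, and, given that a center node has label $c\in\{0,1\}$, each of its neighbours has the same label $c$ with probability $P_c\in[0,1]$. Let $X_0, X_1$ be independent random feature vectors in $\mathbb{R}^{\iota}$ distributed as the node features of class $0$ and class $1$, with means $\mu_{X_0},\mu_{X_1}$. Consider a one-layer GCN without non-linear activation, with kernel $W\neq 0$, so that the output representation of a node of class $0$ is $O_0=W\big(P_0X_0+(1-P_0)X_1\big)$ and that of a node of class $1$ is $O_1=W\big(P_1X_1+(1-P_1)X_0\big)$. Put $\sigma_c^2=\mathbb{E}\|W(X_c-\mu_{X_c})\|^2$ for $c=0,1$, and assume $\sigma_0>0$ and $\sigma_1>0$. Define $S_c=\big(\mathbb{E}\|O_c-\mathbb{E}O_c\|^2\big)^{1/2}$ for $c=0,1$, $M_{0,1}=\|\mathbb{E}O_0-\mathbb{E}O_1\|$, and the complexity measure $\mathcal{C}=(S_0+S_1)/M_{0,1}$ (with $\mathcal{C}=+\infty$ if $M_{0,1}=0$). Then $\mathcal{C}\to+\infty$ as $|P_0+P_1-1|\to 0$.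
   Context: The complexity measure is the "Consistency of Representations" measure based on the Davies–Bouldin index with $p=2$ and $k=2$ classes: for classes $i,j$, $S_i$ is the root-mean-square distance of class-$i$ output representations to their centroid $\mu_{\mathcal{O}_i}$, $M_{i,j}=\|\mu_{\mathcal{O}_i}-\mu_{\mathcal{O}_j}\|_2$, and $\mathcal{C}=\frac{1}{k}\sum_i\max_{j\neq i}\frac{S_i+S_j}{M_{i,j}}$, which for $k=2$ equals $(S_0+S_1)/M_{0,1}$. A larger $\mathcal{C}$ is interpreted as worse generalization. The GCN layer (with mean aggregation over the $d$ neighbours including the self-loop) has output $W\sum_{j\in\mathcal{N}(v_i)}\frac{1}{d}x_j$; the paper models its output for a class-$c$ node as stated in the claim. *)

theory Defs
  imports "HOL-Probability.Probability"
begin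

definition gcn_out :: "real^'i^'o \<Rightarrow> real \<Rightarrow> ('a \<Rightarrow> real^'i) \<Rightarrow> ('a \<Rightarrow> real^'i) \<Rightarrow> 'a \<Rightarrow> real^'o" where
  "gcn_out W p Xs Xo \<omega> = W *v (p *\<^sub>R Xs \<omega> + (1 - p) *\<^sub>R Xo \<omega>)"

definition spread :: "'a measure \<Rightarrow> ('a \<Rightarrow> real^'o) \<Rightarrow> real" where
  "spread M Y = sqrt (integral\<^sup>L M (\<lambda>\<omega>. (norm (Y \<omega> - integral\<^sup>L M Y))\<^sup>2))"

definition consistency :: "'a measure \<Rightarrow> ('a \<Rightarrow> real^'o) \<Rightarrow> ('a \<Rightarrow> real^'o) \<Rightarrow> ereal" where
  "consistency M Y0 Y1 =
     (let m = norm (integral\<^sup>L M Y0 - integral\<^sup>L M Y1)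
      in if m = 0 then PInfty else ereal ((spread M Y0 + spread M Y1) / m))"

end

theory Submission
  imports Defs
begin

lemma bl_comp: "bounded_linear (\<lambda>x. (W *v x) $ i)" for W :: "real^'i^'o"
  by (rule bounded_linear_compose[OF bounded_linear_vec_nth matrix_vector_mul_bounded_linear])
lemma meas_comp: "(\<lambda>x. (W *v (x - c)) $ i) \<in> borel_measurable (borel :: (real^'i) measure)" for W :: "real^'i^'o"
proof -
  have "continuous_on UNIV (\<lambda>x. (W *v x) $ i)"
    using bl_comp[of W i] by (simp add: linear_continuous_on)
  hence "continuous_on UNIV (\<lambda>x. (W *v (x - c)) $ i)"
    by (rule continuous_on_compose2[where f="\<lambda>x. x - c"]) (auto intro: continuous_intros)
  thus ?thesis by (rule borel_measurable_continuous_onI)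
qed
lemma norm_sq_comb: "(norm (p *\<^sub>R u + q *\<^sub>R v))\<^sup>2 = p\<^sup>2 * (norm u)\<^sup>2 + q\<^sup>2 * (norm v)\<^sup>2 + 2*p*q * inner u v"
  for u v :: "'a::real_inner"
  unfolding power2_norm_eq_inner by (simp add: inner_add_left inner_add_right inner_commute[of v u] power2_eq_square algebra_simps)
lemma final_arith:
  fixes S0 S1 t K c B :: real
  assumes "c > 0" "S0 \<ge> c" "S1 \<ge> 0" "K > 0" "\<bar>t\<bar> < c / (K * (\<bar>B\<bar> + 1))" "\<bar>t\<bar> * K \<noteq> 0"
  shows "B < (S0 + S1) / (\<bar>t\<bar> * K)"
proof -
  have m: "\<bar>t\<bar> * K > 0" using assms by (simp add: zero_less_mult_iff)
  have d: "K * (\<bar>B\<bar> + 1) > 0" using assms(4) by (simp add: add_pos_nonneg)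
  have "\<bar>t\<bar> * (K * (\<bar>B\<bar> + 1)) < c"
    using assms(5) pos_less_divide_eq[OF d] by simp
  hence "\<bar>t\<bar> * K * (\<bar>B\<bar> + 1) < c" by (simp add: mult.assoc)
  hence "\<bar>t\<bar> * K * B < S0 + S1" using assms m
    by (smt (verit) mult_left_mono abs_ge_self)
  thus ?thesis using m by (simp add: field_simps)
qed

theorem theorem1:
  fixes M :: "'a measure" and X0 X1 :: "'a \<Rightarrow> real^'i" and W :: "real^'i^'o"
  assumes "prob_space M"
    and "X0 \<in> borel_measurable M" and "X1 \<in> borel_measurable M"
    and "prob_space.indep_var M borel X0 borel X1"
    and "integrable M X0" and "integrable M X1"
    and "integrable M (\<lambda>\<omega>. (norm (X0 \<omega>))\<^sup>2)"
    and "integrable M (\<lambda>\<omega>. (norm (X1 \<omega>))\<^sup>2)"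
    and "W \<noteq> 0"
    and "integral\<^sup>L M (\<lambda>\<omega>. (norm (W *v (X0 \<omega> - integral\<^sup>L M X0)))\<^sup>2) > 0"
    and "integral\<^sup>L M (\<lambda>\<omega>. (norm (W *v (X1 \<omega> - integral\<^sup>L M X1)))\<^sup>2) > 0"
  shows "\<forall>B::real. \<exists>\<delta>>0. \<forall>P0 P1. P0 \<in> {0..1} \<longrightarrow> P1 \<in> {0..1} \<longrightarrow>
           \<bar>P0 + P1 - 1\<bar> < \<delta> \<longrightarrow>
           ereal B < consistency M (gcn_out W P0 X0 X1) (gcn_out W P1 X1 X0)"
proof -
  interpret prob_space M by (rule assms(1))
  define \<mu>0 where "\<mu>0 = integral\<^sup>L M X0"
  define \<mu>1 where "\<mu>1 = integral\<^sup>L M X1"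
  define U where "U = (\<lambda>\<omega>. W *v (X0 \<omega> - \<mu>0))"
  define V where "V = (\<lambda>\<omega>. W *v (X1 \<omega> - \<mu>1))"
  define s0 where "s0 = integral\<^sup>L M (\<lambda>\<omega>. (norm (U \<omega>))\<^sup>2)"
  define s1 where "s1 = integral\<^sup>L M (\<lambda>\<omega>. (norm (V \<omega>))\<^sup>2)"
  have s0p: "s0 > 0" and s1p: "s1 > 0" using assms(10,11) by (simp_all add: s0_def s1_def U_def V_def \<mu>0_def \<mu>1_def)
  have iU2: "integrable M (\<lambda>\<omega>. (norm (U \<omega>))\<^sup>2)"
    using s0p not_integrable_integral_eq unfolding s0_def by fastforce
  have iV2: "integrable M (\<lambda>\<omega>. (norm (V \<omega>))\<^sup>2)"
    using s1p not_integrable_integral_eq unfolding s1_def by fastforce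
  have blW: "bounded_linear ((*v) W)" by simp
  have int_out: "integral\<^sup>L M (gcn_out W p Xs Xo) = W *v (p *\<^sub>R integral\<^sup>L M Xs + (1 - p) *\<^sub>R integral\<^sup>L M Xo)"
    if "integrable M Xs" "integrable M Xo" for p Xs Xo
  proof -
    have "integral\<^sup>L M (gcn_out W p Xs Xo) = W *v integral\<^sup>L M (\<lambda>\<omega>. p *\<^sub>R Xs \<omega> + (1 - p) *\<^sub>R Xo \<omega>)"
      unfolding gcn_out_def[abs_def]
      by (rule integral_bounded_linear[OF blW]) (use that in auto)
    also have "\<dots> = W *v (p *\<^sub>R integral\<^sup>L M Xs + (1 - p) *\<^sub>R integral\<^sup>L M Xo)"
      using that by (simp add: integral_add)
    finally show ?thesis .
  qed
  have cross: "integrable M (\<lambda>\<omega>. inner (U \<omega>) (V \<omega>)) \<and> integral\<^sup>L M (\<lambda>\<omega>. inner (U \<omega>) (V \<omega>)) = 0"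
  proof -
    have comp: "integrable M (\<lambda>\<omega>. U \<omega> $ i * V \<omega> $ i) \<and> integral\<^sup>L M (\<lambda>\<omega>. U \<omega> $ i * V \<omega> $ i) = 0" for i
    proof -
      have ind: "indep_var borel ((\<lambda>x. (W *v (x - \<mu>0)) $ i) \<circ> X0) borel ((\<lambda>x. (W *v (x - \<mu>1)) $ i) \<circ> X1)"
        by (rule indep_var_compose[OF assms(4) meas_comp meas_comp])
      have ind': "indep_var borel (\<lambda>\<omega>. U \<omega> $ i) borel (\<lambda>\<omega>. V \<omega> $ i)"
        using ind by (simp add: U_def V_def o_def)
      have iU: "integrable M (\<lambda>\<omega>. U \<omega> $ i)" unfolding U_def
        by (rule integrable_bounded_linear[OF bl_comp]) (use assms(5) in auto)
      have iV: "integrable M (\<lambda>\<omega>. V \<omega> $ i)" unfolding V_def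
        by (rule integrable_bounded_linear[OF bl_comp]) (use assms(6) in auto)
      have eU: "integral\<^sup>L M (\<lambda>\<omega>. U \<omega> $ i) = 0"
      proof -
        have "integral\<^sup>L M (\<lambda>\<omega>. U \<omega> $ i) = (W *v integral\<^sup>L M (\<lambda>\<omega>. X0 \<omega> - \<mu>0)) $ i"
          unfolding U_def by (rule integral_bounded_linear[OF bl_comp]) (use assms(5) in auto)
        also have "\<dots> = 0" using assms(5) by (simp add: \<mu>0_def prob_space)
        finally show ?thesis .
      qed
      show ?thesis using indep_var_lebesgue_integral[OF ind' iU iV] indep_var_integrable[OF ind' iU iV] eU
        by simp
    qed
    have eq: "(\<lambda>\<omega>. inner (U \<omega>) (V \<omega>)) = (\<lambda>\<omega>. \<Sum>i\<in>UNIV. U \<omega> $ i * V \<omega> $ i)"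
      by (simp add: inner_vec_def)
    show ?thesis unfolding eq using comp by (simp add: integral_sum)
  qed
  define c where "c = sqrt (min s0 s1 / 2)"
  have cpos: "c > 0" using s0p s1p by (simp add: c_def)
  have S0: "spread M (gcn_out W p X0 X1) \<ge> c" for p
  proof -
    have pt: "gcn_out W p X0 X1 \<omega> - integral\<^sup>L M (gcn_out W p X0 X1) = p *\<^sub>R U \<omega> + (1 - p) *\<^sub>R V \<omega>" for \<omega>
      unfolding int_out[OF assms(5,6)] gcn_out_def U_def V_def \<mu>0_def \<mu>1_def
      by (simp add: matrix_vector_right_distrib matrix_vector_mult_diff_distrib matrix_vector_mult_scaleR scaleR_right_diff_distrib algebra_simps)
    have "integral\<^sup>L M (\<lambda>\<omega>. (norm (gcn_out W p X0 X1 \<omega> - integral\<^sup>L M (gcn_out W p X0 X1)))\<^sup>2)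
       = integral\<^sup>L M (\<lambda>\<omega>. p\<^sup>2 * (norm (U \<omega>))\<^sup>2 + (1-p)\<^sup>2 * (norm (V \<omega>))\<^sup>2 + 2*p*(1-p) * inner (U \<omega>) (V \<omega>))"
      unfolding pt norm_sq_comb ..
    also have "\<dots> = p\<^sup>2 * s0 + (1-p)\<^sup>2 * s1"
      using iU2 iV2 cross by (simp add: s0_def s1_def)
    finally have e: "integral\<^sup>L M (\<lambda>\<omega>. (norm (gcn_out W p X0 X1 \<omega> - integral\<^sup>L M (gcn_out W p X0 X1)))\<^sup>2) = p\<^sup>2 * s0 + (1-p)\<^sup>2 * s1" .
    have "min s0 s1 / 2 \<le> min s0 s1 * (p\<^sup>2 + (1-p)\<^sup>2)"
    proof -
      have "1/2 \<le> p\<^sup>2 + (1-p)\<^sup>2" using zero_le_power2[of "2*p-1"] unfolding power2_eq_square by (simp add: algebra_simps)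
      moreover have "min s0 s1 \<ge> 0" using s0p s1p by simp
      ultimately have "min s0 s1 * (1/2) \<le> min s0 s1 * (p\<^sup>2 + (1-p)\<^sup>2)" by (rule mult_left_mono)
      thus ?thesis by simp
    qed
    also have "\<dots> \<le> p\<^sup>2 * s0 + (1-p)\<^sup>2 * s1"
      by (smt (verit) min.cobounded1 min.cobounded2 mult_right_mono zero_le_power2 distrib_left mult.commute)
    finally show ?thesis unfolding spread_def e c_def by simp
  qed
  have S1: "spread M Y \<ge> 0" for Y :: "'a \<Rightarrow> real^'o"
    unfolding spread_def by simp
  define K where "K = norm (W *v (\<mu>0 - \<mu>1))"
  have Meq: "norm (integral\<^sup>L M (gcn_out W P0 X0 X1) - integral\<^sup>L M (gcn_out W P1 X1 X0)) = \<bar>P0 + P1 - 1\<bar> * K" for P0 P1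
  proof -
    have "W *v (P0 *\<^sub>R \<mu>0 + (1 - P0) *\<^sub>R \<mu>1) - W *v (P1 *\<^sub>R \<mu>1 + (1 - P1) *\<^sub>R \<mu>0) = (P0 + P1 - 1) *\<^sub>R (W *v (\<mu>0 - \<mu>1))"
      by (simp add: matrix_vector_right_distrib matrix_vector_mult_diff_distrib matrix_vector_mult_scaleR scaleR_right_diff_distrib algebra_simps)
    thus ?thesis unfolding int_out[OF assms(5,6)] int_out[OF assms(6,5)] K_def \<mu>0_def \<mu>1_def by simp
  qed
  show ?thesis
  proof
    fix B :: real
    show "\<exists>\<delta>>0. \<forall>P0 P1. P0 \<in> {0..1} \<longrightarrow> P1 \<in> {0..1} \<longrightarrow>
           \<bar>P0 + P1 - 1\<bar> < \<delta> \<longrightarrow>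
           ereal B < consistency M (gcn_out W P0 X0 X1) (gcn_out W P1 X1 X0)"
    proof (cases "K = 0")
      case True
      show ?thesis by (rule exI[of _ 1]) (simp add: consistency_def Let_def Meq True)
    next
      case False
      hence Kp: "K > 0" by (simp add: K_def)
      show ?thesis
      proof (rule exI[of _ "c / (K * (\<bar>B\<bar> + 1))"], intro conjI allI impI)
        show "c / (K * (\<bar>B\<bar> + 1)) > 0" using cpos Kp by (simp add: zero_less_mult_iff add_pos_nonneg)
      next
        fix P0 P1 :: real
        assume "\<bar>P0 + P1 - 1\<bar> < c / (K * (\<bar>B\<bar> + 1))"
        thus "ereal B < consistency M (gcn_out W P0 X0 X1) (gcn_out W P1 X1 X0)"
          unfolding consistency_def Let_def Meq
          using final_arith[OF cpos S0 S1 Kp] by auto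
      qed
    qed
  qed
qed

end
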